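(* Let $\mathbf{x}_1,\dots,\mathbf{x}_n\in\mathbb{R}^d$, $y_1,\dots,y_n\in\mathbb{R}$ and $\mathbf{v}\in\mathbb{R}^k$ be arbitrary. Any $\widetilde{\mathbf{W}}\in\mathbb{R}^{k\times d}$ satisfying $$\frac1n\sum_{i=1}^n\big(\mathbf{x}_i^T\widetilde{\mathbf{W}}^T\mathrm{diag}(\mathbf{v})\widetilde{\mathbf{W}}\mathbf{x}_i-y_i\big)\mathbf{x}_i\mathbf{x}_i^T=\mathbf{0}$$ is a global minimizer over $\mathbf{W}\in\mathbb{R}^{k\times d}$ of $\mathcal{L}(\mathbf{W})=\frac1{2n}\sum_{i=1}^n\big(\mathbf{x}_i^T\mathbf{W}^T\mathrm{diag}(\mathbf{v})\mathbf{W}\mathbf{x}_i-y_i\big)^2$. *)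

theory Defs
  imports "HOL-Analysis.Analysis"
begin

definition diag_mat :: "real^'k \<Rightarrow> real^'k^'k" where
  "diag_mat v = (\<chi> i j. if i = j then v $ i else 0)"

definition outer :: "real^'d \<Rightarrow> real^'d^'d" where
  "outer x = (\<chi> i j. x $ i * x $ j)"

definition qpred :: "real^'d^'k \<Rightarrow> real^'k \<Rightarrow> real^'d \<Rightarrow> real" where
  "qpred W v x = x \<bullet> ((transpose W ** diag_mat v ** W) *v x)"

definition loss :: "nat \<Rightarrow> (nat \<Rightarrow> real^'d) \<Rightarrow> (nat \<Rightarrow> real) \<Rightarrow> real^'k \<Rightarrow> real^'d^'k \<Rightarrow> real" where
  "loss n x y v W = (1 / (2 * real n)) * (\<Sum>i = 1..n. (qpred W v (x i) - y i)^2)"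

end

theory Submission
  imports Defs
begin

lemma Q_expand: "(z::real^'d) \<bullet> (A *v z) = (\<Sum>a\<in>UNIV. \<Sum>b\<in>UNIV. A$a$b * outer z $a$b)"
  by (simp add: inner_vec_def matrix_vector_mult_def outer_def sum_distrib_left mult_ac)

lemma S_comp: "(\<Sum>i\<in>I. (r i::real) *\<^sub>R outer (x i)) $ a $ b = (\<Sum>i\<in>I. r i * outer (x i) $ a $ b)"
  by (simp add: sum_component)

lemma key:
  fixes A :: "real^'d^'d" and x :: "nat \<Rightarrow> real^'d"
  shows "(\<Sum>i\<in>I. r i * (x i \<bullet> (A *v x i))) = (\<Sum>a\<in>UNIV. \<Sum>b\<in>UNIV. A$a$b * (\<Sum>i\<in>I. r i *\<^sub>R outer (x i)) $ a $ b)"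
  unfolding Q_expand S_comp
  by (simp add: sum_distrib_left sum.swap[of _ I] mult_ac)

theorem lemma6p1:
  fixes n :: nat and x :: "nat \<Rightarrow> real^'d" and y :: "nat \<Rightarrow> real"
    and v :: "real^'k" and Wt :: "real^'d^'k"
  assumes "(1 / real n) *\<^sub>R (\<Sum>i = 1..n. (qpred Wt v (x i) - y i) *\<^sub>R outer (x i)) = 0"
  shows "\<forall>W :: real^'d^'k. loss n x y v Wt \<le> loss n x y v W"
proof
  fix W :: "real^'d^'k"
  show "loss n x y v Wt \<le> loss n x y v W"
  proof (cases "n = 0")
    case True then show ?thesis by (simp add: loss_def)
  next
    case False
    define r where "r i = qpred Wt v (x i) - y i" for i
    define A where "A = (transpose W ** diag_mat v ** W) - (transpose Wt ** diag_mat v ** Wt)"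
    define d where "d i = x i \<bullet> (A *v x i)" for i
    have S0: "(\<Sum>i = 1..n. r i *\<^sub>R outer (x i)) = 0"
      using assms False unfolding r_def by simp
    have eq: "qpred W v (x i) - y i = r i + d i" for i
      unfolding r_def d_def A_def qpred_def
      by (simp add: matrix_vector_mult_diff_rdistrib inner_diff_right)
    have cross: "(\<Sum>i = 1..n. r i * d i) = 0"
      unfolding d_def key S0 by simp
    have "(\<Sum>i = 1..n. (r i)^2) \<le> (\<Sum>i = 1..n. (r i)^2 + 2 * (r i * d i) + (d i)^2)"
    proof -
      have "(\<Sum>i = 1..n. (r i)^2 + 2 * (r i * d i) + (d i)^2)
          = (\<Sum>i = 1..n. (r i)^2) + 2 * (\<Sum>i = 1..n. r i * d i) + (\<Sum>i = 1..n. (d i)^2)"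
        by (simp add: sum.distrib sum_distrib_left)
      moreover have "0 \<le> (\<Sum>i = 1..n. (d i)^2)" by (simp add: sum_nonneg)
      ultimately show ?thesis using cross by simp
    qed
    also have "\<dots> = (\<Sum>i = 1..n. (qpred W v (x i) - y i)^2)"
      by (simp add: eq power2_sum algebra_simps)
    finally have "(\<Sum>i = 1..n. (qpred Wt v (x i) - y i)^2) \<le> (\<Sum>i = 1..n. (qpred W v (x i) - y i)^2)"
      by (simp add: r_def)
    then show ?thesis unfolding loss_def
      by (intro mult_left_mono) auto
  qed
qed

end
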